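(* Let $(\mathcal C,\mathcal D,O,\vec z,v)$ be a configuration for $(F,f)$, let $C$ be a PB constraint, and suppose there is a substitution $\omega$ such that $$\text{(a)}\quad \mathcal C\cup\mathcal D\cup\{f\le v-1\}\cup\{\neg C\}\ \vdash\ \mathcal C|_\omega\cup O(\vec z|_\omega,\vec z)\cup\{f|_\omega\le f\},$$ $$\text{(b)}\quad \mathcal C\cup\mathcal D\cup\{f\le v-1\}\cup\{\neg C\}\cup O(\vec z,\vec z|_\omega)\ \vdash\ 0\ge1.$$ If $(\mathcal C,\mathcal D,O,\vec z,v)$ is weakly valid then $(\mathcal C,\mathcal D\cup\{C\},O,\vec z,v)$ is weakly valid; if it is valid then $(\mathcal C,\mathcal D\cup\{C\},O,\vec z,v)$ is valid.
   Context: Boolean variables take values in $\{0,1\}$; a literal is a variable $x$ or $\bar x=1-x$. A PB constraint is $C:\ \sum_i a_i\ell_i\ge A$ with integer $a_i,A$; its negation $\neg C$ is $\sum_i -a_i\ell_i\ge -A+1$. A total assignment $\alpha$ satisfies $C$ if $\sum_i a_i\alpha(\ell_i)\ge A$. A PB formula is a finite set of PB constraints. A substitution $\omega$ maps variables to literals or to $\{0,1\}$ (identity outside its domain, extended to literals by $\omega(\bar x)=\overline{\omega(x)}$); $C|_\omega$ replaces each $\ell_i$ by $\omega(\ell_i)$, $G|_\omega=\{D|_\omega: D\in G\}$, and for a total assignment $\alpha$, $\alpha\circ\omega$ is $x\mapsto\alpha(\omega(x))$. An objective is $f=\sum_i w_i\ell_i$ with integer $w_i$; $f|_\omega=\sum_i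 w_i\omega(\ell_i)$; $f\le k$ and $f|_\omega\le f$ are read as PB constraints, and for $k=\infty$ the constraints $f\le\infty$, $f\le\infty-1$ are trivially true (empty). $G\vdash D$ means $D$ is derivable from $G$ in the cutting planes system (axioms from $G$, literal axioms $\ell\ge0$, positive integer linear combinations, division of a constraint with nonnegative coefficients by a positive integer rounding coefficients and degree up), where additionally $G\vdash D$ whenever $0\ge1$ is so derivable from $G\cup\{\neg D\}$; $G\vdash H$ means $G\vdash D$ for all $D\in H$. This derivability is sound. A preorder encoding is a PB formula $O(\vec u,\vec v)$ over two lists of $n$ placeholder variables with a list $\vec z=(z_1,\dots,z_n)$ of variables, such that $\alpha\preceq\beta$ iff $O(\vec z|_\alpha,\vec z|_\beta)$ is true is reflexive and transitive; here $O(\vec z|_\alpha,\vec z|_\beta)$ is $O$ with $u_i$ replaced by $\alpha(z_i)$ and $v_i$ by $\beta(z_i)$, so $O(\vec z|_\omega,\vec z)$ replaces $u_i$ by $\omega(z_i)$ and $v_i$ by $z_i$, and $O(\vec z,\vec z|_\omega)$ replaces $u_i$ by $z_i$ and $v_i$ by $\omega(z_i)$. $\alpha\preceq_f\beta$ iff $\alpha\preceq\beta$ and $f(\alpha)\le f(\beta)$. Fix input $F$ and objective $f$. A configuration $(\mathcal C,\mathcal D,O,\vec z,v)$ has PB sets $\mathcal C,\mathcal D$, a preorder encoding, and $v\in\mathbb Z\cup\{\infty\}$. It is weakly valid if (1) for every integer $v'<v$, satisfiability of $F\cup\{f\le v'\}$ implies satisfiability of $\mathcal C\cup\{f\le v'\}$;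 (2) every total $\rho$ satisfying $\mathcal C\cup\{f\le v-1\}$ admits a total $\rho'\preceq_f\rho$ satisfying $\mathcal C\cup\mathcal D\cup\{f\le v-1\}$. It is valid if also (3) $v<\infty$ implies $F\cup\{f\le v\}$ satisfiable; (4) for every integer $v'<v$, satisfiability of $\mathcal C\cup\{f\le v'\}$ implies satisfiability of $F\cup\{f\le v'\}$. *)

theory Defs
  imports Main
begin

datatype 'v lit = Pos 'v | Neg 'v

fun lit_var :: "'v lit \<Rightarrow> 'v" where
  "lit_var (Pos x) = x" | "lit_var (Neg x) = x"

fun lit_neg :: "'v lit \<Rightarrow> 'v lit" where
  "lit_neg (Pos x) = Neg x" | "lit_neg (Neg x) = Pos x"

datatype 'v pbc = Geq "(int \<times> 'v lit) list" int

type_synonym 'v assignment = "'v \<Rightarrow> bool"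

fun lit_val :: "'v assignment \<Rightarrow> 'v lit \<Rightarrow> int" where
  "lit_val \<alpha> (Pos x) = (if \<alpha> x then 1 else 0)"
| "lit_val \<alpha> (Neg x) = 1 - (if \<alpha> x then 1 else 0)"

definition terms_val :: "'v assignment \<Rightarrow> (int \<times> 'v lit) list \<Rightarrow> int" where
  "terms_val \<alpha> ts = sum_list (map (\<lambda>(a, l). a * lit_val \<alpha> l) ts)"

fun pb_sat :: "'v assignment \<Rightarrow> 'v pbc \<Rightarrow> bool" where
  "pb_sat \<alpha> (Geq ts A) = (terms_val \<alpha> ts \<ge> A)"

definition pb_sat_set :: "'v assignment \<Rightarrow> 'v pbc set \<Rightarrow> bool" where
  "pb_sat_set \<alpha> G = (\<forall>C\<in>G. pb_sat \<alpha> C)"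

definition pb_satisfiable :: "'v pbc set \<Rightarrow> bool" where
  "pb_satisfiable G = (\<exists>\<alpha>. pb_sat_set \<alpha> G)"

fun pb_neg :: "'v pbc \<Rightarrow> 'v pbc" where
  "pb_neg (Geq ts A) = Geq (map (\<lambda>(a, l). (- a, l)) ts) (- A + 1)"

definition pb_false :: "'v pbc" where
  "pb_false = Geq [] 1"

text \<open>Since a negative literal is by definition 1 - x, a constraint is identified with any
  constraint having the same normal form over variables (coefficient of each variable
  and degree after moving the constants to the right-hand side).\<close>
definition var_coef :: "(int \<times> 'v lit) list \<Rightarrow> 'v \<Rightarrow> int" where
  "var_coef ts x = sum_list (map (\<lambda>(a, l). case l of Pos y \<Rightarrow> (if y = x then a else 0)
                                                 | Neg y \<Rightarrow> (if y = x then - a else 0)) ts)"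

definition const_part :: "(int \<times> 'v lit) list \<Rightarrow> int" where
  "const_part ts = sum_list (map (\<lambda>(a, l). case l of Pos y \<Rightarrow> 0 | Neg y \<Rightarrow> a) ts)"

fun same_form :: "'v pbc \<Rightarrow> 'v pbc \<Rightarrow> bool" where
  "same_form (Geq ts A) (Geq us B) =
     (var_coef ts = var_coef us \<and> A - const_part ts = B - const_part us)"

definition ceil_div :: "int \<Rightarrow> int \<Rightarrow> int" where
  "ceil_div a c = - ((- a) div c)"

inductive cp :: "'v pbc set \<Rightarrow> 'v pbc \<Rightarrow> bool" for G :: "'v pbc set" where
  cp_axiom: "C \<in> G \<Longrightarrow> cp G C"
| cp_lit: "cp G (Geq [(1, l)] 0)"
| cp_add: "cp G (Geq ts A) \<Longrightarrow> cp G (Geq us B) \<Longrightarrow> cp G (Geq (ts @ us) (A + B))"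
| cp_mult: "cp G (Geq ts A) \<Longrightarrow> c > 0 \<Longrightarrow>
             cp G (Geq (map (\<lambda>(a, l). (c * a, l)) ts) (c * A))"
| cp_div: "cp G (Geq ts A) \<Longrightarrow> (\<forall>(a, l) \<in> set ts. a \<ge> 0) \<Longrightarrow> c > 0 \<Longrightarrow>
             cp G (Geq (map (\<lambda>(a, l). (ceil_div a c, l)) ts) (ceil_div A c))"
| cp_norm: "cp G C \<Longrightarrow> same_form C D \<Longrightarrow> cp G D"

definition derives :: "'v pbc set \<Rightarrow> 'v pbc \<Rightarrow> bool" where
  "derives G D = (cp G D \<or> cp (insert (pb_neg D) G) pb_false)"

definition derives_set :: "'v pbc set \<Rightarrow> 'v pbc set \<Rightarrow> bool" where
  "derives_set G H = (\<forall>D\<in>H. derives G D)"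

text \<open>A substitution maps each variable to a literal or a constant; variables outside its
  domain are mapped to their own positive literal.\<close>
datatype 'v sval = SLit "'v lit" | SConst bool

fun sval_neg :: "'v sval \<Rightarrow> 'v sval" where
  "sval_neg (SLit l) = SLit (lit_neg l)" | "sval_neg (SConst b) = SConst (\<not> b)"

fun subst_lit :: "('a \<Rightarrow> 'b sval) \<Rightarrow> 'a lit \<Rightarrow> 'b sval" where
  "subst_lit \<omega> (Pos x) = \<omega> x" | "subst_lit \<omega> (Neg x) = sval_neg (\<omega> x)"

definition subst_terms :: "('a \<Rightarrow> 'b sval) \<Rightarrow> (int \<times> 'a lit) list \<Rightarrow> (int \<times> 'b lit) list" where
  "subst_terms \<omega> ts = concat (map (\<lambda>(a, l). case subst_lit \<omega> l of
                                     SLit l' \<Rightarrow> [(a, l')] | SConst b \<Rightarrow> []) ts)"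

definition subst_const :: "('a \<Rightarrow> 'b sval) \<Rightarrow> (int \<times> 'a lit) list \<Rightarrow> int" where
  "subst_const \<omega> ts = sum_list (map (\<lambda>(a, l). case subst_lit \<omega> l of
                                     SLit l' \<Rightarrow> 0 | SConst b \<Rightarrow> (if b then a else 0)) ts)"

fun pb_subst :: "('a \<Rightarrow> 'b sval) \<Rightarrow> 'a pbc \<Rightarrow> 'b pbc" where
  "pb_subst \<omega> (Geq ts A) = Geq (subst_terms \<omega> ts) (A - subst_const \<omega> ts)"

definition pb_subst_set :: "('a \<Rightarrow> 'b sval) \<Rightarrow> 'a pbc set \<Rightarrow> 'b pbc set" where
  "pb_subst_set \<omega> G = pb_subst \<omega> ` G"

type_synonym 'v objective = "(int \<times> 'v lit) list"

definition obj_val :: "'v objective \<Rightarrow> 'v assignment \<Rightarrow> int" where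
  "obj_val f \<alpha> = terms_val \<alpha> f"

datatype ubound = Fin int | Infty

fun ub_dec :: "ubound \<Rightarrow> ubound" where
  "ub_dec (Fin k) = Fin (k - 1)" | "ub_dec Infty = Infty"

fun ub_less :: "int \<Rightarrow> ubound \<Rightarrow> bool" where
  "ub_less k (Fin v) = (k < v)" | "ub_less k Infty = True"

definition obj_le :: "'v objective \<Rightarrow> int \<Rightarrow> 'v pbc" where
  "obj_le f k = Geq (map (\<lambda>(w, l). (- w, l)) f) (- k)"

fun obj_le_ub :: "'v objective \<Rightarrow> ubound \<Rightarrow> 'v pbc set" where
  "obj_le_ub f (Fin k) = {obj_le f k}" | "obj_le_ub f Infty = {}"

text \<open>The constraint f|_omega <= f, i.e. sum w_i l_i - sum w_i omega(l_i) >= 0.\<close>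
definition obj_subst_le :: "('v \<Rightarrow> 'v sval) \<Rightarrow> 'v objective \<Rightarrow> 'v pbc" where
  "obj_subst_le \<omega> f =
     Geq (f @ map (\<lambda>(w, l). (- w, l)) (subst_terms \<omega> f)) (subst_const \<omega> f)"

text \<open>Placeholder variables u_i (PU i) and v_i (PV i).\<close>
datatype ph = PU nat | PV nat

definition pb_vars :: "'v pbc \<Rightarrow> 'v set" where
  "pb_vars C = (case C of Geq ts A \<Rightarrow> lit_var ` snd ` set ts)"

definition inst_asg :: "'v list \<Rightarrow> 'v assignment \<Rightarrow> 'v assignment \<Rightarrow> ph \<Rightarrow> 'v sval" where
  "inst_asg z \<alpha> \<beta> p = (case p of PU i \<Rightarrow> SConst (\<alpha> (z ! i)) | PV i \<Rightarrow> SConst (\<beta> (z ! i)))"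

text \<open>alpha \<preceq> beta iff Ord(z|_alpha, z|_beta) is true (it is variable-free, so true under any
  assignment; we evaluate it under alpha).\<close>
definition pre_le :: "ph pbc set \<Rightarrow> 'v list \<Rightarrow> 'v assignment \<Rightarrow> 'v assignment \<Rightarrow> bool" where
  "pre_le Ord z \<alpha> \<beta> = pb_sat_set \<alpha> (pb_subst_set (inst_asg z \<alpha> \<beta>) Ord)"

definition preorder_encoding :: "ph pbc set \<Rightarrow> 'v list \<Rightarrow> bool" where
  "preorder_encoding Ord z =
     (finite Ord
      \<and> (\<forall>C\<in>Ord. \<forall>p\<in>pb_vars C. (\<exists>i<length z. p = PU i \<or> p = PV i))
      \<and> (\<forall>\<alpha>. pre_le Ord z \<alpha> \<alpha>)
      \<and> (\<forall>\<alpha> \<beta> \<gamma>. pre_le Ord z \<alpha> \<beta> \<longrightarrow> pre_le Ord z \<beta> \<gamma> \<longrightarrow> pre_le Ord z \<alpha> \<gamma>))"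

definition pre_le_f :: "ph pbc set \<Rightarrow> 'v list \<Rightarrow> 'v objective \<Rightarrow> 'v assignment \<Rightarrow> 'v assignment \<Rightarrow> bool" where
  "pre_le_f Ord z f \<alpha> \<beta> = (pre_le Ord z \<alpha> \<beta> \<and> obj_val f \<alpha> \<le> obj_val f \<beta>)"

text \<open>Ord(z|_omega, z): u_i := omega(z_i), v_i := z_i.\<close>
definition inst_left :: "'v list \<Rightarrow> ('v \<Rightarrow> 'v sval) \<Rightarrow> ph \<Rightarrow> 'v sval" where
  "inst_left z \<omega> p = (case p of PU i \<Rightarrow> \<omega> (z ! i) | PV i \<Rightarrow> SLit (Pos (z ! i)))"

text \<open>Ord(z, z|_omega): u_i := z_i, v_i := omega(z_i).\<close>
definition inst_right :: "'v list \<Rightarrow> ('v \<Rightarrow> 'v sval) \<Rightarrow> ph \<Rightarrow> 'v sval" where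
  "inst_right z \<omega> p = (case p of PU i \<Rightarrow> SLit (Pos (z ! i)) | PV i \<Rightarrow> \<omega> (z ! i))"

definition weakly_valid ::
  "'v pbc set \<Rightarrow> 'v objective \<Rightarrow> 'v pbc set \<Rightarrow> 'v pbc set \<Rightarrow> ph pbc set \<Rightarrow> 'v list \<Rightarrow> ubound \<Rightarrow> bool"
where
  "weakly_valid F f \<C> \<D> Ord z v =
     ((\<forall>v'. ub_less v' v \<longrightarrow> pb_satisfiable (F \<union> {obj_le f v'})
                            \<longrightarrow> pb_satisfiable (\<C> \<union> {obj_le f v'}))
      \<and> (\<forall>\<rho>. pb_sat_set \<rho> (\<C> \<union> obj_le_ub f (ub_dec v)) \<longrightarrow>
             (\<exists>\<rho>'. pre_le_f Ord z f \<rho>' \<rho> \<and> pb_sat_set \<rho>' (\<C> \<union> \<D> \<union> obj_le_ub f (ub_dec v)))))"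

definition valid ::
  "'v pbc set \<Rightarrow> 'v objective \<Rightarrow> 'v pbc set \<Rightarrow> 'v pbc set \<Rightarrow> ph pbc set \<Rightarrow> 'v list \<Rightarrow> ubound \<Rightarrow> bool"
where
  "valid F f \<C> \<D> Ord z v =
     (weakly_valid F f \<C> \<D> Ord z v
      \<and> (\<forall>k. v = Fin k \<longrightarrow> pb_satisfiable (F \<union> {obj_le f k}))
      \<and> (\<forall>v'. ub_less v' v \<longrightarrow> pb_satisfiable (\<C> \<union> {obj_le f v'})
                            \<longrightarrow> pb_satisfiable (F \<union> {obj_le f v'})))"

end

theory Submission
  imports Defs
begin

lemma lit_val01: "lit_val \<alpha> l = 0 \<or> lit_val \<alpha> l = 1"
  by (cases l) auto

lemma terms_val_Nil[simp]: "terms_val \<alpha> [] = 0" by (simp add: terms_val_def)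
lemma terms_val_Cons[simp]: "terms_val \<alpha> ((a,l)#ts) = a * lit_val \<alpha> l + terms_val \<alpha> ts"
  by (simp add: terms_val_def)
lemma terms_val_append[simp]: "terms_val \<alpha> (ts @ us) = terms_val \<alpha> ts + terms_val \<alpha> us"
  by (simp add: terms_val_def)
lemma terms_val_mult: "terms_val \<alpha> (map (\<lambda>(a, l). (c * a, l)) ts) = c * terms_val \<alpha> ts"
proof (induction ts)
  case (Cons t ts) then show ?case by (cases t) (simp add: ring_distribs)
qed simp
lemma terms_val_neg: "terms_val \<alpha> (map (\<lambda>(a, l). (- a, l)) ts) = - terms_val \<alpha> ts"
proof (induction ts)
  case (Cons t ts) then show ?case by (cases t) simp
qed simp
lemma div_super: "(c::int) > 0 \<Longrightarrow> x div c + y div c \<le> (x+y) div c"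
proof -
  assume c: "c > 0"
  have "0 \<le> (x mod c + y mod c) div c" using c by (simp add: div_int_pos_iff)
  then show ?thesis using div_add1_eq[of x y c] by linarith
qed

lemma cd_super: "(c::int) > 0 \<Longrightarrow> ceil_div (a+b) c \<le> ceil_div a c + ceil_div b c"
  unfolding ceil_div_def using div_super[of c "-a" "-b"] by simp

lemma cd_mono: "(c::int) > 0 \<Longrightarrow> A \<le> T \<Longrightarrow> ceil_div A c \<le> ceil_div T c"
  unfolding ceil_div_def using zdiv_mono1[of "-T" "-A" c] by simp

lemma cd_01: "x = 0 \<or> x = 1 \<Longrightarrow> ceil_div a c * x = ceil_div (a*x) c"
  by (auto simp: ceil_div_def)
lemma terms_val_div: "(c::int) > 0 \<Longrightarrow>
   ceil_div (terms_val \<alpha> ts) c \<le> terms_val \<alpha> (map (\<lambda>(a, l). (ceil_div a c, l)) ts)"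
proof (induction ts)
  case Nil then show ?case by (simp add: ceil_div_def)
next
  case (Cons t ts)
  obtain a l where t: "t = (a,l)" by (cases t)
  have "ceil_div (a * lit_val \<alpha> l + terms_val \<alpha> ts) c \<le> ceil_div (a * lit_val \<alpha> l) c + ceil_div (terms_val \<alpha> ts) c"
    using cd_super Cons by blast
  also have "ceil_div (a * lit_val \<alpha> l) c = ceil_div a c * lit_val \<alpha> l"
    using cd_01 lit_val01 by metis
  finally have h: "ceil_div (a * lit_val \<alpha> l + terms_val \<alpha> ts) c \<le> ceil_div a c * lit_val \<alpha> l + ceil_div (terms_val \<alpha> ts) c" .
  have IH: "ceil_div (terms_val \<alpha> ts) c \<le> terms_val \<alpha> (map (\<lambda>(a, l). (ceil_div a c, l)) ts)"
    using Cons by blast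
  show ?case using h IH unfolding t by simp
qed

lemma norm_val: "finite V \<Longrightarrow> lit_var ` snd ` set ts \<subseteq> V \<Longrightarrow>
  terms_val \<alpha> ts - const_part ts = (\<Sum>x\<in>V. var_coef ts x * (if \<alpha> x then 1 else 0))"
proof (induction ts)
  case Nil then show ?case by (simp add: const_part_def var_coef_def)
next
  case (Cons t ts)
  obtain a l where t: "t = (a,l)" by (cases t)
  have vc: "var_coef (t#ts) x = var_coef [t] x + var_coef ts x" for x
    by (simp add: var_coef_def)
  have cp: "const_part (t#ts) = const_part [t] + const_part ts"
    by (simp add: const_part_def)
  have IH: "terms_val \<alpha> ts - const_part ts = (\<Sum>x\<in>V. var_coef ts x * (if \<alpha> x then 1 else 0))"
    using Cons by auto
  have "lit_var l \<in> V" using Cons.prems t by auto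
  have one: "a * lit_val \<alpha> l - const_part [t] = (\<Sum>x\<in>V. var_coef [t] x * (if \<alpha> x then 1 else 0))"
  proof (cases l)
    case (Pos y)
    have "(\<Sum>x\<in>V. var_coef [t] x * (if \<alpha> x then 1 else 0)) = (\<Sum>x\<in>V. if y = x then a * (if \<alpha> y then 1 else 0) else 0)"
      by (rule sum.cong) (auto simp: var_coef_def t Pos)
    also have "\<dots> = a * (if \<alpha> y then 1 else 0)" using \<open>lit_var l \<in> V\<close> Pos Cons.prems(1) by simp
    finally show ?thesis by (simp add: t Pos const_part_def)
  next
    case (Neg y)
    have "(\<Sum>x\<in>V. var_coef [t] x * (if \<alpha> x then 1 else 0)) = (\<Sum>x\<in>V. if y = x then - a * (if \<alpha> y then 1 else 0) else 0)"
      by (rule sum.cong) (auto simp: var_coef_def t Neg)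
    also have "\<dots> = - a * (if \<alpha> y then 1 else 0)" using \<open>lit_var l \<in> V\<close> Neg Cons.prems(1) by simp
    finally show ?thesis by (simp add: t Neg const_part_def algebra_simps)
  qed
  show ?case using IH one t unfolding vc cp by (simp add: sum.distrib algebra_simps)
qed

lemma same_form_sound: "same_form C D \<Longrightarrow> pb_sat \<alpha> C \<Longrightarrow> pb_sat \<alpha> D"
proof (cases C; cases D)
  fix ts A us B assume C: "C = Geq ts A" and D: "D = Geq us B" and sf: "same_form C D" and s: "pb_sat \<alpha> C"
  let ?V = "lit_var ` snd ` set ts \<union> lit_var ` snd ` set us"
  have f: "finite ?V" by simp
  have e1: "terms_val \<alpha> ts - const_part ts = (\<Sum>x\<in>?V. var_coef ts x * (if \<alpha> x then 1 else 0))"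
    by (rule norm_val[OF f]) auto
  have e2: "terms_val \<alpha> us - const_part us = (\<Sum>x\<in>?V. var_coef us x * (if \<alpha> x then 1 else 0))"
    by (rule norm_val[OF f]) auto
  show "pb_sat \<alpha> D" using sf s e1 e2 C D by simp
qed

lemma cp_sound: "cp G D \<Longrightarrow> pb_sat_set \<alpha> G \<Longrightarrow> pb_sat \<alpha> D"
proof (induction rule: cp.induct)
  case (cp_axiom C) then show ?case by (auto simp: pb_sat_set_def)
next
  case (cp_lit l) then show ?case using lit_val01[of \<alpha> l] by auto
next
  case (cp_add ts A us B) then show ?case by simp
next
  case (cp_mult ts A c) then show ?case by (simp add: terms_val_mult)
next
  case (cp_div ts A c) then show ?case using terms_val_div[of c \<alpha> ts] cd_mono[of c A "terms_val \<alpha> ts"] by simp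
next
  case (cp_norm C D) then show ?case using same_form_sound by blast
qed

lemma pb_neg_sat: "\<not> pb_sat \<alpha> C \<Longrightarrow> pb_sat \<alpha> (pb_neg C)"
  by (cases C) (simp add: terms_val_neg)

lemma derives_sound: "derives G D \<Longrightarrow> pb_sat_set \<alpha> G \<Longrightarrow> pb_sat \<alpha> D"
  unfolding derives_def
proof (elim disjE)
  assume "cp G D" "pb_sat_set \<alpha> G" then show ?thesis by (rule cp_sound)
next
  assume h: "cp (insert (pb_neg D) G) pb_false" "pb_sat_set \<alpha> G"
  show ?thesis
  proof (rule ccontr)
    assume "\<not> pb_sat \<alpha> D"
    then have "pb_sat_set \<alpha> (insert (pb_neg D) G)" using h(2) pb_neg_sat by (auto simp: pb_sat_set_def)
    then have "pb_sat \<alpha> pb_false" using cp_sound h(1) by blast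
    then show False by (simp add: pb_false_def)
  qed
qed

fun sv :: "'v assignment \<Rightarrow> 'v sval \<Rightarrow> bool" where
  "sv \<alpha> (SLit l) = (lit_val \<alpha> l = 1)" | "sv \<alpha> (SConst b) = b"

definition acomp :: "'v assignment \<Rightarrow> ('a \<Rightarrow> 'v sval) \<Rightarrow> 'a assignment" where
  "acomp \<alpha> \<sigma> = (\<lambda>x. sv \<alpha> (\<sigma> x))"

lemma lit_val_neg: "lit_val \<alpha> (lit_neg l) = 1 - lit_val \<alpha> l"
  by (cases l) auto

lemma subst_one:
  "(case subst_lit \<sigma> l of SLit l' \<Rightarrow> lit_val \<alpha> l' | SConst b \<Rightarrow> (if b then 1 else 0))
   = lit_val (acomp \<alpha> \<sigma>) l"
proof (cases l)
  case (Pos x) then show ?thesis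
    using lit_val01[of \<alpha>] by (cases "\<sigma> x") (auto simp: acomp_def)
next
  case (Neg x) then show ?thesis
    using lit_val01[of \<alpha>] by (cases "\<sigma> x") (auto simp: acomp_def lit_val_neg)
qed

lemma subst_terms_Cons: "subst_terms \<sigma> ((a,l)#ts) =
  (case subst_lit \<sigma> l of SLit l' \<Rightarrow> [(a, l')] | SConst b \<Rightarrow> []) @ subst_terms \<sigma> ts"
  by (simp add: subst_terms_def)
lemma subst_const_Cons: "subst_const \<sigma> ((a,l)#ts) =
  (case subst_lit \<sigma> l of SLit l' \<Rightarrow> 0 | SConst b \<Rightarrow> (if b then a else 0)) + subst_const \<sigma> ts"
  by (simp add: subst_const_def)

lemma subst_val: "terms_val \<alpha> (subst_terms \<sigma> ts) + subst_const \<sigma> ts = terms_val (acomp \<alpha> \<sigma>) ts"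
proof (induction ts)
  case Nil then show ?case by (simp add: subst_terms_def subst_const_def)
next
  case (Cons t ts)
  obtain a l where t: "t = (a,l)" by (cases t)
  have one: "terms_val \<alpha> (case subst_lit \<sigma> l of SLit l' \<Rightarrow> [(a, l')] | SConst b \<Rightarrow> [])
     + (case subst_lit \<sigma> l of SLit l' \<Rightarrow> 0 | SConst b \<Rightarrow> (if b then a else 0))
     = a * lit_val (acomp \<alpha> \<sigma>) l"
    using subst_one[where \<sigma>=\<sigma> and l=l and \<alpha>=\<alpha>] by (cases "subst_lit \<sigma> l") auto
  show ?case using Cons one unfolding t subst_terms_Cons subst_const_Cons by simp
qed

lemma pb_subst_sat: "pb_sat \<alpha> (pb_subst \<sigma> C) = pb_sat (acomp \<alpha> \<sigma>) C"
  by (cases C) (use subst_val in \<open>auto simp: algebra_simps\<close>; smt (verit) subst_val)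

lemma subst_set_sat: "pb_sat_set \<alpha> (pb_subst_set \<sigma> G) = pb_sat_set (acomp \<alpha> \<sigma>) G"
  by (auto simp: pb_sat_set_def pb_subst_set_def pb_subst_sat)

lemma obj_le_sat: "pb_sat \<alpha> (obj_le f k) = (obj_val f \<alpha> \<le> k)"
  by (auto simp: obj_le_def obj_val_def terms_val_neg)

lemma obj_subst_sat: "pb_sat \<alpha> (obj_subst_le \<omega> f) = (obj_val f (acomp \<alpha> \<omega>) \<le> obj_val f \<alpha>)"
  using subst_val[of \<alpha> \<omega> f] by (auto simp: obj_subst_le_def obj_val_def terms_val_neg)

definition pair_asg :: "'v list \<Rightarrow> 'v assignment \<Rightarrow> 'v assignment \<Rightarrow> ph assignment" where
  "pair_asg z \<alpha> \<beta> = (\<lambda>p. case p of PU i \<Rightarrow> \<alpha> (z!i) | PV i \<Rightarrow> \<beta> (z!i))"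

lemma pre_le_eq: "pre_le Ord z \<alpha> \<beta> = pb_sat_set (pair_asg z \<alpha> \<beta>) Ord"
proof -
  have "acomp \<alpha> (inst_asg z \<alpha> \<beta>) = pair_asg z \<alpha> \<beta>"
    by (rule ext) (auto simp: acomp_def inst_asg_def pair_asg_def split: ph.split)
  then show ?thesis by (simp add: pre_le_def subst_set_sat)
qed

lemma inst_left_sat: "pb_sat_set \<alpha> (pb_subst_set (inst_left z \<omega>) Ord) = pre_le Ord z (acomp \<alpha> \<omega>) \<alpha>"
proof -
  have "acomp \<alpha> (inst_left z \<omega>) = pair_asg z (acomp \<alpha> \<omega>) \<alpha>"
    by (rule ext) (auto simp: acomp_def inst_left_def pair_asg_def split: ph.split)
  then show ?thesis by (simp add: pre_le_eq subst_set_sat)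
qed

lemma inst_right_sat: "pb_sat_set \<alpha> (pb_subst_set (inst_right z \<omega>) Ord) = pre_le Ord z \<alpha> (acomp \<alpha> \<omega>)"
proof -
  have "acomp \<alpha> (inst_right z \<omega>) = pair_asg z \<alpha> (acomp \<alpha> \<omega>)"
    by (rule ext) (auto simp: acomp_def inst_right_def pair_asg_def split: ph.split)
  then show ?thesis by (simp add: pre_le_eq subst_set_sat)
qed

lemma terms_val_vars: "(\<forall>x\<in>lit_var ` snd ` set ts. g1 x = g2 x) \<Longrightarrow> terms_val g1 ts = terms_val g2 ts"
proof (induction ts)
  case (Cons t ts)
  obtain a l where t: "t = (a,l)" by (cases t)
  have "lit_val g1 l = lit_val g2 l" using Cons.prems t by (cases l) auto
  moreover have "terms_val g1 ts = terms_val g2 ts" using Cons by simp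
  ultimately show ?case using t by simp
qed simp

lemma pb_sat_vars: "(\<forall>x\<in>pb_vars C. g1 x = g2 x) \<Longrightarrow> pb_sat g1 C = pb_sat g2 C"
proof -
  assume h: "\<forall>x\<in>pb_vars C. g1 x = g2 x"
  obtain ts A where C: "C = Geq ts A" by (cases C)
  have "\<forall>x\<in>lit_var ` snd ` set ts. g1 x = g2 x" using h C by (simp add: pb_vars_def)
  then have "terms_val g1 ts = terms_val g2 ts" by (rule terms_val_vars)
  then show ?thesis using C by simp
qed

lemma pre_le_key: assumes enc: "preorder_encoding Ord z" and k: "map \<gamma> z = map \<beta> z"
  shows "pre_le Ord z \<gamma> \<alpha> = pre_le Ord z \<beta> \<alpha>"
proof -
  have vars: "\<forall>C\<in>Ord. \<forall>p\<in>pb_vars C. (\<exists>i<length z. p = PU i \<or> p = PV i)"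
    using enc unfolding preorder_encoding_def by (elim conjE)
  have "pb_sat (pair_asg z \<gamma> \<alpha>) C = pb_sat (pair_asg z \<beta> \<alpha>) C" if CO: "C \<in> Ord" for C
  proof (rule pb_sat_vars, intro ballI)
    fix p assume p: "p \<in> pb_vars C"
    have "\<exists>i<length z. p = PU i \<or> p = PV i" using bspec[OF bspec[OF vars CO] p] .
    then obtain i where i: "i < length z" "p = PU i \<or> p = PV i" by blast
    have "map \<gamma> z ! i = map \<beta> z ! i" using k by (rule arg_cong)
    then have "\<gamma> (z!i) = \<beta> (z!i)" using i(1) by simp
    then show "pair_asg z \<gamma> \<alpha> p = pair_asg z \<beta> \<alpha> p" using i(2) by (auto simp: pair_asg_def)
  qed
  then show ?thesis unfolding pre_le_eq pb_sat_set_def by blast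
qed

definition strict_rel :: "ph pbc set \<Rightarrow> 'v list \<Rightarrow> ('v assignment \<times> 'v assignment) set" where
  "strict_rel Ord z = {(\<alpha>, \<beta>). pre_le Ord z \<alpha> \<beta> \<and> \<not> pre_le Ord z \<beta> \<alpha>}"

lemma wf_strict: assumes enc: "preorder_encoding Ord z" shows "wf (strict_rel Ord z)"
proof -
  define \<mu> where "\<mu> \<beta> = card ((\<lambda>\<gamma>. map \<gamma> z) ` {\<gamma>. pre_le Ord z \<gamma> \<beta>})" for \<beta>
  have fin: "finite ((\<lambda>\<gamma>. map \<gamma> z) ` S)" for S :: "'a assignment set"
  proof (rule finite_subset)
    show "(\<lambda>\<gamma>. map \<gamma> z) ` S \<subseteq> {xs. set xs \<subseteq> UNIV \<and> length xs = length z}" by auto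
    show "finite {xs. set xs \<subseteq> (UNIV::bool set) \<and> length xs = length z}"
      by (rule finite_lists_length_eq) simp
  qed
  have tr: "\<And>a b c. pre_le Ord z a b \<Longrightarrow> pre_le Ord z b c \<Longrightarrow> pre_le Ord z a c"
    and rf: "\<And>a. pre_le Ord z a a" using enc unfolding preorder_encoding_def by blast+
  have "strict_rel Ord z \<subseteq> measure \<mu>"
  proof
    fix x assume "x \<in> strict_rel Ord z"
    then obtain \<alpha> \<beta> where x: "x = (\<alpha>, \<beta>)" and ab: "pre_le Ord z \<alpha> \<beta>" and nba: "\<not> pre_le Ord z \<beta> \<alpha>"
      by (auto simp: strict_rel_def)
    have sub: "(\<lambda>\<gamma>. map \<gamma> z) ` {\<gamma>. pre_le Ord z \<gamma> \<alpha>} \<subseteq> (\<lambda>\<gamma>. map \<gamma> z) ` {\<gamma>. pre_le Ord z \<gamma> \<beta>}"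
      using tr ab by blast
    have "map \<beta> z \<in> (\<lambda>\<gamma>. map \<gamma> z) ` {\<gamma>. pre_le Ord z \<gamma> \<beta>}" using rf by blast
    moreover have "map \<beta> z \<notin> (\<lambda>\<gamma>. map \<gamma> z) ` {\<gamma>. pre_le Ord z \<gamma> \<alpha>}"
    proof
      assume "map \<beta> z \<in> (\<lambda>\<gamma>. map \<gamma> z) ` {\<gamma>. pre_le Ord z \<gamma> \<alpha>}"
      then obtain \<gamma> where "map \<gamma> z = map \<beta> z" "pre_le Ord z \<gamma> \<alpha>" by (metis (no_types, lifting) imageE mem_Collect_eq)
      then show False using pre_le_key[OF enc] nba by metis
    qed
    ultimately have "(\<lambda>\<gamma>. map \<gamma> z) ` {\<gamma>. pre_le Ord z \<gamma> \<alpha>} \<subset> (\<lambda>\<gamma>. map \<gamma> z) ` {\<gamma>. pre_le Ord z \<gamma> \<beta>}"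
      using sub by blast
    then have "\<mu> \<alpha> < \<mu> \<beta>" unfolding \<mu>_def by (rule psubset_card_mono[OF fin])
    then show "x \<in> measure \<mu>" using x by simp
  qed
  then show ?thesis using wf_subset wf_measure by blast
qed

lemma sat_Un[simp]: "pb_sat_set \<alpha> (A \<union> B) = (pb_sat_set \<alpha> A \<and> pb_sat_set \<alpha> B)"
  by (auto simp: pb_sat_set_def)
lemma sat_insert[simp]: "pb_sat_set \<alpha> (insert c A) = (pb_sat \<alpha> c \<and> pb_sat_set \<alpha> A)"
  by (auto simp: pb_sat_set_def)
lemma sat_empty[simp]: "pb_sat_set \<alpha> {}"
  by (auto simp: pb_sat_set_def)

lemma bound_mono: "pb_sat_set \<rho> (obj_le_ub f u) \<Longrightarrow> obj_val f \<rho>2 \<le> obj_val f \<rho> \<Longrightarrow> pb_sat_set \<rho>2 (obj_le_ub f u)"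
  by (cases u) (auto simp: obj_le_sat)

lemma derives_set_sound: "derives_set G H \<Longrightarrow> pb_sat_set \<alpha> G \<Longrightarrow> pb_sat_set \<alpha> H"
  unfolding derives_set_def pb_sat_set_def using derives_sound pb_sat_set_def by blast

theorem mainTheorem7:
  fixes F \<C> \<D> :: "'v pbc set" and f :: "'v objective" and Ord :: "ph pbc set"
    and z :: "'v list" and v :: ubound and C :: "'v pbc" and \<omega> :: "'v \<Rightarrow> 'v sval"
  assumes enc: "preorder_encoding Ord z"
    and a: "derives_set (\<C> \<union> \<D> \<union> obj_le_ub f (ub_dec v) \<union> {pb_neg C})
              (pb_subst_set \<omega> \<C> \<union> pb_subst_set (inst_left z \<omega>) Ord \<union> {obj_subst_le \<omega> f})"
    and b: "derives (\<C> \<union> \<D> \<union> obj_le_ub f (ub_dec v) \<union> {pb_neg C}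
                       \<union> pb_subst_set (inst_right z \<omega>) Ord) pb_false"
  shows "(weakly_valid F f \<C> \<D> Ord z v \<longrightarrow> weakly_valid F f \<C> (\<D> \<union> {C}) Ord z v)
       \<and> (valid F f \<C> \<D> Ord z v \<longrightarrow> valid F f \<C> (\<D> \<union> {C}) Ord z v)"
proof -
  define B where "B = obj_le_ub f (ub_dec v)"
  have tr: "\<And>a b c. pre_le Ord z a b \<Longrightarrow> pre_le Ord z b c \<Longrightarrow> pre_le Ord z a c"
    and rf: "\<And>a. pre_le Ord z a a" using enc unfolding preorder_encoding_def by blast+
  have WV: "weakly_valid F f \<C> (\<D> \<union> {C}) Ord z v" if wv: "weakly_valid F f \<C> \<D> Ord z v"
  proof -
    have W1: "\<forall>v'. ub_less v' v \<longrightarrow> pb_satisfiable (F \<union> {obj_le f v'})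
                            \<longrightarrow> pb_satisfiable (\<C> \<union> {obj_le f v'})"
      using wv unfolding weakly_valid_def by blast
    have W2: "\<And>\<rho>. pb_sat_set \<rho> (\<C> \<union> B) \<Longrightarrow> \<exists>\<rho>'. pre_le_f Ord z f \<rho>' \<rho> \<and> pb_sat_set \<rho>' (\<C> \<union> \<D> \<union> B)"
      using wv unfolding weakly_valid_def B_def by blast
    have claim: "pb_sat_set \<rho>1 (\<C> \<union> \<D> \<union> B) \<longrightarrow> (\<exists>\<rho>'. pre_le_f Ord z f \<rho>' \<rho>1 \<and> pb_sat_set \<rho>' (\<C> \<union> (\<D> \<union> {C}) \<union> B))" for \<rho>1
    proof (induction \<rho>1 rule: wf_induct[OF wf_strict[OF enc]])
      case (1 \<rho>1)
      show ?case
      proof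
        assume s1: "pb_sat_set \<rho>1 (\<C> \<union> \<D> \<union> B)"
        show "\<exists>\<rho>'. pre_le_f Ord z f \<rho>' \<rho>1 \<and> pb_sat_set \<rho>' (\<C> \<union> (\<D> \<union> {C}) \<union> B)"
        proof (cases "pb_sat \<rho>1 C")
          case True
          then show ?thesis using s1 rf by (auto simp: pre_le_f_def)
        next
          case False
          define \<rho>2 where "\<rho>2 = acomp \<rho>1 \<omega>"
          have prem: "pb_sat_set \<rho>1 (\<C> \<union> \<D> \<union> obj_le_ub f (ub_dec v) \<union> {pb_neg C})"
            using s1 False pb_neg_sat B_def by auto
          have ra: "pb_sat_set \<rho>1 (pb_subst_set \<omega> \<C> \<union> pb_subst_set (inst_left z \<omega>) Ord \<union> {obj_subst_le \<omega> f})"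
            by (rule derives_set_sound[OF a prem])
          have c2: "pb_sat_set \<rho>2 \<C>" using ra by (simp add: subst_set_sat \<rho>2_def)
          have le21: "pre_le Ord z \<rho>2 \<rho>1" using ra by (simp add: inst_left_sat \<rho>2_def)
          have f21: "obj_val f \<rho>2 \<le> obj_val f \<rho>1" using ra by (simp add: obj_subst_sat \<rho>2_def)
          have nle12: "\<not> pre_le Ord z \<rho>1 \<rho>2"
          proof
            assume "pre_le Ord z \<rho>1 \<rho>2"
            then have "pb_sat_set \<rho>1 (pb_subst_set (inst_right z \<omega>) Ord)"
              by (simp add: inst_right_sat \<rho>2_def)
            then have "pb_sat_set \<rho>1 (\<C> \<union> \<D> \<union> obj_le_ub f (ub_dec v) \<union> {pb_neg C}
                       \<union> pb_subst_set (inst_right z \<omega>) Ord)" using prem by simp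
            then have "pb_sat \<rho>1 pb_false" by (rule derives_sound[OF b])
            then show False by (simp add: pb_false_def)
          qed
          have b2: "pb_sat_set \<rho>2 B" using bound_mono[of \<rho>1 f "ub_dec v" \<rho>2] s1 f21 unfolding B_def by simp
          obtain \<rho>3 where p32: "pre_le_f Ord z f \<rho>3 \<rho>2" and s3: "pb_sat_set \<rho>3 (\<C> \<union> \<D> \<union> B)"
            using W2[of \<rho>2] c2 b2 by auto
          have le31: "pre_le Ord z \<rho>3 \<rho>1" using p32 le21 tr by (auto simp: pre_le_f_def)
          have nle13: "\<not> pre_le Ord z \<rho>1 \<rho>3" using p32 nle12 tr by (auto simp: pre_le_f_def)
          have "(\<rho>3, \<rho>1) \<in> strict_rel Ord z" using le31 nle13 by (simp add: strict_rel_def)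
          then obtain \<rho>' where p': "pre_le_f Ord z f \<rho>' \<rho>3" and s': "pb_sat_set \<rho>' (\<C> \<union> (\<D> \<union> {C}) \<union> B)"
            using 1 s3 by blast
          have "pre_le_f Ord z f \<rho>' \<rho>1" using p' p32 le21 f21 tr unfolding pre_le_f_def by fastforce
          then show ?thesis using s' by blast
        qed
      qed
    qed
    have "\<forall>\<rho>. pb_sat_set \<rho> (\<C> \<union> B) \<longrightarrow>
             (\<exists>\<rho>'. pre_le_f Ord z f \<rho>' \<rho> \<and> pb_sat_set \<rho>' (\<C> \<union> (\<D> \<union> {C}) \<union> B))"
    proof (intro allI impI)
      fix \<rho> assume "pb_sat_set \<rho> (\<C> \<union> B)"
      then obtain \<rho>1 where p1: "pre_le_f Ord z f \<rho>1 \<rho>" and s1: "pb_sat_set \<rho>1 (\<C> \<union> \<D> \<union> B)"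
        using W2 by blast
      obtain \<rho>' where p': "pre_le_f Ord z f \<rho>' \<rho>1" and s': "pb_sat_set \<rho>' (\<C> \<union> (\<D> \<union> {C}) \<union> B)"
        using claim s1 by blast
      have "pre_le_f Ord z f \<rho>' \<rho>" using p' p1 tr unfolding pre_le_f_def by fastforce
      then show "\<exists>\<rho>'. pre_le_f Ord z f \<rho>' \<rho> \<and> pb_sat_set \<rho>' (\<C> \<union> (\<D> \<union> {C}) \<union> B)" using s' by blast
    qed
    then show ?thesis using W1 unfolding weakly_valid_def B_def by blast
  qed
  show ?thesis
  proof
    show "weakly_valid F f \<C> \<D> Ord z v \<longrightarrow> weakly_valid F f \<C> (\<D> \<union> {C}) Ord z v" using WV by blast
    show "valid F f \<C> \<D> Ord z v \<longrightarrow> valid F f \<C> (\<D> \<union> {C}) Ord z v"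
      using WV unfolding valid_def by blast
  qed
qed

end
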